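(* For every $k\in\mathbb N$ there exists no measure $k$-reflective real planar $C^3$-smooth germ of pseudo-billiard with an odd number of skew reflection laws.
   Context: Let $L\subset\mathbb R^2$ be a line and $A_-,A_0,A_+\in\mathbb R^2$ with $A_0\in L$, $A_\pm\notin L$ and the lines $A_-A_0$, $A_0A_+$ symmetric with respect to $L$; the triple satisfies the usual reflection law with respect to $L$ if $A_-,A_+$ lie on the same side of $L$, and the skew one otherwise. A germ of real planar pseudo-billiard is a collection of germs of smooth curves $(a_j,A_j)$, $j=1,\dots,k$, each with a prescribed reflection law (usual or skew), such that $A_1\dots A_k$ is a $k$-periodic orbit, where a $k$-periodic orbit is a $k$-gon $A_1'\dots A_k'$, $A_j'\in a_j$ (indices mod $k$), with $A_j'\ne A_{j\pm1}'$, $A_j'A_{j\pm1}'\ne T_{A_j'}a_j$, the lines $A_j'A_{j\pm1}'$ symmetric with respect to $T_{A_j'}a_j$ and the triple $A_{j-1}',A_j',A_{j+1}'$ satisfying the law prescribed for $a_j$. It is measure $k$-reflective if, within the set of $k$-gons satisfying these conditions at all vertices with $j\neq1,k$, the subset of $k$-periodic orbits has positive two-dimensional Lebesgue measure. *)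

theory Defs
  imports "HOL-Analysis.Analysis"
begin

text \<open>Points of the plane are vectors of type real^2.
  Vertices/curves are indexed by j in {0..<k} (0-based); neighbours are taken mod k.\<close>

definition det2 :: "real^2 \<Rightarrow> real^2 \<Rightarrow> real" where
  "det2 u w = u$1 * w$2 - u$2 * w$1"

text \<open>Reflection of a direction w with respect to a line with direction v.\<close>
definition reflect_dir :: "real^2 \<Rightarrow> real^2 \<Rightarrow> real^2" where
  "reflect_dir v w = (2 * (w \<bullet> v) / (v \<bullet> v)) *\<^sub>R v - w"

text \<open>C^3 smoothness of a parametrized planar curve on a set S.\<close>
definition C3_on :: "real set \<Rightarrow> (real \<Rightarrow> real^2) \<Rightarrow> bool" where
  "C3_on S \<gamma> \<longleftrightarrow> (\<exists>\<gamma>1 \<gamma>2 \<gamma>3.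
      (\<forall>t\<in>S. (\<gamma> has_vector_derivative \<gamma>1 t) (at t)) \<and>
      (\<forall>t\<in>S. (\<gamma>1 has_vector_derivative \<gamma>2 t) (at t)) \<and>
      (\<forall>t\<in>S. (\<gamma>2 has_vector_derivative \<gamma>3 t) (at t)) \<and>
      continuous_on S \<gamma>3)"

text \<open>A germ at gamma 0 of a regular C^3 curve, represented by a parametrization
  which is C^3 near 0 with nonzero velocity at 0.\<close>
definition curve_germ :: "(real \<Rightarrow> real^2) \<Rightarrow> bool" where
  "curve_germ \<gamma> \<longleftrightarrow> (\<exists>\<epsilon>>0. C3_on {-\<epsilon><..<\<epsilon>} \<gamma>) \<and> vector_derivative \<gamma> (at 0) \<noteq> 0"

text \<open>Reflection condition at vertex P of a curve with tangent direction v, with neighbouring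
  vertices Qm, Qp; skew = True for the skew law, False for the usual one.\<close>
definition refl_law :: "bool \<Rightarrow> real^2 \<Rightarrow> real^2 \<Rightarrow> real^2 \<Rightarrow> real^2 \<Rightarrow> bool" where
  "refl_law skew v P Qm Qp \<longleftrightarrow>
     P \<noteq> Qm \<and> P \<noteq> Qp \<and>
     det2 v (Qm - P) \<noteq> 0 \<and> det2 v (Qp - P) \<noteq> 0 \<and>
     det2 (reflect_dir v (Qm - P)) (Qp - P) = 0 \<and>
     (if skew then det2 v (Qm - P) * det2 v (Qp - P) < 0
      else det2 v (Qm - P) * det2 v (Qp - P) > 0)"

text \<open>The reflection condition at vertex j of the k-gon with vertices gamma i (t i).\<close>
definition vertex_ok :: "nat \<Rightarrow> (nat \<Rightarrow> real \<Rightarrow> real^2) \<Rightarrow> (nat \<Rightarrow> bool) \<Rightarrow> (nat \<Rightarrow> real) \<Rightarrow> nat \<Rightarrow> bool" where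
  "vertex_ok k \<gamma> skew t j \<longleftrightarrow>
     refl_law (skew j) (vector_derivative (\<gamma> j) (at (t j))) (\<gamma> j (t j))
       (\<gamma> ((j + k - 1) mod k) (t ((j + k - 1) mod k)))
       (\<gamma> ((j + 1) mod k) (t ((j + 1) mod k)))"

definition periodic_orbit :: "nat \<Rightarrow> (nat \<Rightarrow> real \<Rightarrow> real^2) \<Rightarrow> (nat \<Rightarrow> bool) \<Rightarrow> (nat \<Rightarrow> real) \<Rightarrow> bool" where
  "periodic_orbit k \<gamma> skew t \<longleftrightarrow> (\<forall>j<k. vertex_ok k \<gamma> skew t j)"

text \<open>A germ of real planar C^3 pseudo-billiard: germs of regular C^3 curves a_j = gamma j at
  A_j = gamma j 0 with laws skew j, such that A_0 ... A_(k-1) is a k-periodic orbit.\<close>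
definition pseudo_billiard :: "nat \<Rightarrow> (nat \<Rightarrow> real \<Rightarrow> real^2) \<Rightarrow> (nat \<Rightarrow> bool) \<Rightarrow> bool" where
  "pseudo_billiard k \<gamma> skew \<longleftrightarrow>
     (\<forall>j<k. curve_germ (\<gamma> j)) \<and> periodic_orbit k \<gamma> skew (\<lambda>_. 0)"

text \<open>Measure k-reflectivity (germ version): for every representative (parameters restricted
  to (-eps,eps)), the set of k-periodic orbits, inside the two-dimensional family of k-gons
  parametrized by the positions (t 0, t 1) of the first two vertices, has positive
  two-dimensional Lebesgue (outer) measure, i.e. is not a Lebesgue null set.\<close>
definition measure_reflective :: "nat \<Rightarrow> (nat \<Rightarrow> real \<Rightarrow> real^2) \<Rightarrow> (nat \<Rightarrow> bool) \<Rightarrow> bool" where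
  "measure_reflective k \<gamma> skew \<longleftrightarrow>
     (\<forall>\<epsilon>>0. (\<lambda>t. (t 0, t 1)) ` {t. (\<forall>j<k. t j \<in> {-\<epsilon><..<\<epsilon>}) \<and> periodic_orbit k \<gamma> skew t}
               \<notin> null_sets (lebesgue :: (real \<times> real) measure))"

end

theory Submission
  imports Defs
begin

lemma graph_null:
  fixes A :: "(real \<times> real) set" and L :: real
  assumes H: "\<And>x y. x \<in> A \<Longrightarrow> y \<in> A \<Longrightarrow> \<bar>snd x - snd y\<bar> \<le> L * \<bar>fst x - fst y\<bar>"
  shows "A \<in> null_sets lebesgue"
proof -
  define D1 where "D1 = {z::real\<times>real. \<forall>a\<in>A. \<bar>snd z - snd a\<bar> \<le> L * \<bar>fst z - fst a\<bar>}"
  have cD1: "closed D1" unfolding D1_def Collect_ball_eq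
    by (intro closed_INT ballI closed_Collect_le continuous_intros)
  have "A \<subseteq> D1" using H by (auto simp: D1_def)
  hence c1: "closure A \<subseteq> D1" using cD1 closure_minimal by blast
  define D2 where "D2 = {z::real\<times>real. \<forall>a\<in>closure A. \<bar>snd z - snd a\<bar> \<le> L * \<bar>fst z - fst a\<bar>}"
  have cD2: "closed D2" unfolding D2_def Collect_ball_eq
    by (intro closed_INT ballI closed_Collect_le continuous_intros)
  have "A \<subseteq> D2" using c1 by (fastforce simp: D2_def D1_def abs_minus_commute)
  hence c2: "closure A \<subseteq> D2" using cD2 closure_minimal by blast
  define C where "C = closure A"
  have Cs: "C \<in> sets (lborel \<Otimes>\<^sub>M lborel)" unfolding C_def lborel_prod by simp
  have slice: "Pair x -` C \<in> null_sets lborel" for x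
  proof -
    have "Pair x -` C \<subseteq> {y. (x,y) \<in> C}" by auto
    have fin: "finite (Pair x -` C)"
    proof (cases "Pair x -` C = {}")
      case False
      then obtain y0 where y0: "(x,y0) \<in> C" by auto
      have "Pair x -` C \<subseteq> {y0}"
      proof
        fix y assume "y \<in> Pair x -` C"
        hence "(x,y) \<in> D2" using c2 C_def by auto
        hence "\<bar>y - y0\<bar> \<le> L * \<bar>x - x\<bar>" using y0 C_def D2_def by auto
        thus "y \<in> {y0}" by simp
      qed
      thus ?thesis using finite_subset by blast
    qed simp
    thus ?thesis by (rule finite_imp_null_set_lborel)
  qed
  have "emeasure (lborel \<Otimes>\<^sub>M lborel) C = (\<integral>\<^sup>+x. emeasure lborel (Pair x -` C) \<partial>lborel)"
    by (rule lborel.emeasure_pair_measure_alt[OF Cs])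
  also have "\<dots> = 0" using slice by (simp add: null_setsD1)
  finally have "emeasure lborel C = 0" by (simp add: lborel_prod)
  hence "C \<in> null_sets lborel" by (simp add: null_sets_def C_def)
  hence "C \<in> null_sets lebesgue" by (rule null_sets_completionI)
  thus ?thesis using null_sets_completion_subset[of A C] closure_subset C_def by auto
qed

lemma graph_null2:
  fixes A :: "(real \<times> real) set" and L :: real
  assumes H: "\<And>x y. x \<in> A \<Longrightarrow> y \<in> A \<Longrightarrow> \<bar>fst x - fst y\<bar> \<le> L * \<bar>snd x - snd y\<bar>"
  shows "A \<in> null_sets lebesgue"
proof -
  define D1 where "D1 = {z::real\<times>real. \<forall>a\<in>A. \<bar>fst z - fst a\<bar> \<le> L * \<bar>snd z - snd a\<bar>}"
  have cD1: "closed D1" unfolding D1_def Collect_ball_eq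
    by (intro closed_INT ballI closed_Collect_le continuous_intros)
  have "A \<subseteq> D1" using H by (auto simp: D1_def)
  hence c1: "closure A \<subseteq> D1" using cD1 closure_minimal by blast
  define D2 where "D2 = {z::real\<times>real. \<forall>a\<in>closure A. \<bar>fst z - fst a\<bar> \<le> L * \<bar>snd z - snd a\<bar>}"
  have cD2: "closed D2" unfolding D2_def Collect_ball_eq
    by (intro closed_INT ballI closed_Collect_le continuous_intros)
  have "A \<subseteq> D2" using c1 by (fastforce simp: D2_def D1_def abs_minus_commute)
  hence c2: "closure A \<subseteq> D2" using cD2 closure_minimal by blast
  define C where "C = closure A"
  have Cs: "C \<in> sets (lborel \<Otimes>\<^sub>M lborel)" unfolding C_def lborel_prod by simp
  have slice: "(\<lambda>y. (y,x)) -` C \<in> null_sets lborel" for x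
  proof -
    have "(\<lambda>y. (y,x)) -` C \<subseteq> {y. (y,x) \<in> C}" by auto
    have fin: "finite ((\<lambda>y. (y,x)) -` C)"
    proof (cases "(\<lambda>y. (y,x)) -` C = {}")
      case False
      then obtain y0 where y0: "(y0,x) \<in> C" by auto
      have "(\<lambda>y. (y,x)) -` C \<subseteq> {y0}"
      proof
        fix y assume "y \<in> (\<lambda>y. (y,x)) -` C"
        hence "(y,x) \<in> D2" using c2 C_def by auto
        hence "\<bar>y - y0\<bar> \<le> L * \<bar>x - x\<bar>" using y0 C_def D2_def by auto
        thus "y \<in> {y0}" by simp
      qed
      thus ?thesis using finite_subset by blast
    qed simp
    thus ?thesis by (rule finite_imp_null_set_lborel)
  qed
  have "emeasure (lborel \<Otimes>\<^sub>M lborel) C = (\<integral>\<^sup>+x. emeasure lborel ((\<lambda>y. (y,x)) -` C) \<partial>lborel)"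
    by (rule lborel_pair.emeasure_pair_measure_alt2[OF Cs])
  also have "\<dots> = 0" using slice by (simp add: null_setsD1)
  finally have "emeasure lborel C = 0" by (simp add: lborel_prod)
  hence "C \<in> null_sets lborel" by (simp add: null_sets_def C_def)
  hence "C \<in> null_sets lebesgue" by (rule null_sets_completionI)
  thus ?thesis using null_sets_completion_subset[of A C] closure_subset C_def by auto
qed

lemma cone_ineq:
  fixes q1 q2 d1 d2 :: real
  assumes "\<bar>q1\<bar> \<le> \<bar>q2\<bar>" "\<bar>q1\<bar> + \<bar>q2\<bar> \<ge> 7/8"
    and "\<bar>q1*d1 + q2*d2\<bar> \<le> (\<bar>d1\<bar> + \<bar>d2\<bar>)/8"
  shows "\<bar>d2\<bar> \<le> ((\<bar>q1\<bar>+1/8)/(\<bar>q2\<bar>-1/8)) * \<bar>d1\<bar>"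
proof -
  have q2: "\<bar>q2\<bar> - 1/8 > 0" using assms by linarith
  have "\<bar>q2*d2\<bar> \<le> \<bar>q1*d1 + q2*d2\<bar> + \<bar>q1*d1\<bar>" by linarith
  hence "\<bar>q2\<bar>*\<bar>d2\<bar> \<le> (\<bar>d1\<bar> + \<bar>d2\<bar>)/8 + \<bar>q1\<bar>*\<bar>d1\<bar>" using assms(3) by (simp add: abs_mult, linarith)
  hence "(\<bar>q2\<bar> - 1/8)*\<bar>d2\<bar> \<le> (\<bar>q1\<bar>+1/8) * \<bar>d1\<bar>" by (simp add: algebra_simps add_divide_distrib)
  thus ?thesis using q2 by (simp add: field_simps)
qed

lemma cone_null:
  fixes A :: "(real \<times> real) set"
  assumes "\<bar>q1\<bar> + \<bar>q2\<bar> \<ge> 7/8"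
    and H: "\<And>x y. x \<in> A \<Longrightarrow> y \<in> A \<Longrightarrow>
      \<bar>q1*(fst x - fst y) + q2*(snd x - snd y)\<bar> \<le> (\<bar>fst x - fst y\<bar> + \<bar>snd x - snd y\<bar>)/8"
  shows "A \<in> null_sets lebesgue"
proof (cases "\<bar>q1\<bar> \<le> \<bar>q2\<bar>")
  case True
  show ?thesis
    by (rule graph_null[where L="(\<bar>q1\<bar>+1/8)/(\<bar>q2\<bar>-1/8)"])
       (rule cone_ineq[OF True assms(1) H], assumption+)
next
  case False
  have H': "\<bar>q2*(snd x - snd y) + q1*(fst x - fst y)\<bar> \<le> (\<bar>snd x - snd y\<bar> + \<bar>fst x - fst y\<bar>)/8"
    if "x \<in> A" "y \<in> A" for x y using H[OF that] by (simp add: add.commute)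
  show ?thesis
    by (rule graph_null2[where L="(\<bar>q2\<bar>+1/8)/(\<bar>q1\<bar>-1/8)"])
       (rule cone_ineq, use False in simp, use assms(1) in simp, rule H', assumption+)
qed

definition Tm :: "real \<Rightarrow> real \<Rightarrow> real \<Rightarrow> real^2^2" where
  "Tm a b c = vector [vector [0, 1], vector [-a/c, -b/c]]"

lemma Tm_mult: "(Tm a b c *v x)$1 = x$2" "(Tm a b c *v x)$2 = -a/c*x$1 - b/c*x$2"
  by (simp_all add: Tm_def matrix_vector_mult_def sum_2)

lemma det_Tm: "det (Tm a b c) = a/c"
  by (simp add: Tm_def det_2)

lemma norm_vec2_le: "norm (x::real^2) \<le> \<bar>x$1\<bar> + \<bar>x$2\<bar>"
  using norm_le_l1_cart[of x] by (simp add: sum_2)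

lemma transfer:
  fixes k :: nat and a b c :: "nat \<Rightarrow> real"
  assumes k2: "k \<ge> 2" and cnz: "\<forall>i<k. c i \<noteq> 0" and pnz: "(\<Prod>i<k. a i / c i) \<noteq> 1"
  shows "\<exists>\<alpha> \<beta> C \<eta>0. (\<alpha> \<noteq> 0 \<or> \<beta> \<noteq> 0) \<and> \<eta>0 > 0 \<and> (\<forall>\<Delta> \<eta>. 0 \<le> \<eta> \<longrightarrow> \<eta> \<le> \<eta>0 \<longrightarrow>
     (\<forall>i<k. \<bar>a i * \<Delta> ((i+k-1) mod k) + b i * \<Delta> i + c i * \<Delta> ((i+1) mod k)\<bar> \<le> \<eta> * (\<Sum>j<k. \<bar>\<Delta> j\<bar>)) \<longrightarrow>
     \<bar>\<alpha> * \<Delta> 0 + \<beta> * \<Delta> 1\<bar> \<le> C * \<eta> * (\<bar>\<Delta> 0\<bar> + \<bar>\<Delta> 1\<bar>))"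
proof -
  define T where "T i = Tm (a i) (b i) (c i)" for i
  define M where "M = rec_nat (mat 1) (\<lambda>m A. T (Suc m mod k) ** A)"
  have M0: "M 0 = mat 1" and MS: "M (Suc m) = T (Suc m mod k) ** M m" for m
    by (simp_all add: M_def)
  define X where "X \<Delta> m = (vector [\<Delta> (m mod k), \<Delta> (Suc m mod k)] :: real^2)" for \<Delta> :: "nat \<Rightarrow> real" and m
  define D where "D \<Delta> = (\<Sum>j<k. \<bar>\<Delta> j\<bar>)" for \<Delta> :: "nat \<Rightarrow> real"
  define hyp where "hyp \<Delta> \<eta> \<longleftrightarrow> (\<forall>i<k. \<bar>a i * \<Delta> ((i+k-1) mod k) + b i * \<Delta> i + c i * \<Delta> ((i+1) mod k)\<bar> \<le> \<eta> * D \<Delta>)"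
    for \<Delta> \<eta>
  have kpos: "k > 0" using k2 by simp
  have step: "norm (X \<Delta> (Suc m) - T (Suc m mod k) *v X \<Delta> m) \<le> \<eta> * D \<Delta> / \<bar>c (Suc m mod k)\<bar>"
    if h: "hyp \<Delta> \<eta>" for \<Delta> \<eta> m
  proof -
    define i where "i = Suc m mod k"
    have ik: "i < k" using kpos by (simp add: i_def)
    have pr: "(i + k - 1) mod k = m mod k"
    proof -
      have "(i + k - 1) mod k = (i + (k - 1)) mod k" using kpos by simp
      also have "\<dots> = (Suc m + (k - 1)) mod k" by (simp add: i_def mod_add_left_eq)
      also have "Suc m + (k - 1) = m + k" using kpos by simp
      finally show ?thesis by simp
    qed
    have nx: "(i + 1) mod k = Suc (Suc m) mod k" by (simp add: i_def mod_Suc_eq)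
    have ci: "c i \<noteq> 0" using cnz ik by simp
    have hi: "\<bar>a i * \<Delta> (m mod k) + b i * \<Delta> i + c i * \<Delta> (Suc (Suc m) mod k)\<bar> \<le> \<eta> * D \<Delta>"
      using h ik pr nx unfolding hyp_def by metis
    have e1: "(X \<Delta> (Suc m) - T i *v X \<Delta> m)$1 = 0"
      by (simp add: X_def T_def Tm_mult i_def)
    have e2: "(X \<Delta> (Suc m) - T i *v X \<Delta> m)$2 = (a i * \<Delta> (m mod k) + b i * \<Delta> i + c i * \<Delta> (Suc (Suc m) mod k)) / c i"
      using ci by (simp add: X_def T_def Tm_mult i_def field_simps)
    have "norm (X \<Delta> (Suc m) - T i *v X \<Delta> m) \<le> \<bar>(a i * \<Delta> (m mod k) + b i * \<Delta> i + c i * \<Delta> (Suc (Suc m) mod k)) / c i\<bar>"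
      using norm_vec2_le[of "X \<Delta> (Suc m) - T i *v X \<Delta> m"] e1 e2 by simp
    also have "\<dots> \<le> \<eta> * D \<Delta> / \<bar>c i\<bar>"
      using hi ci by (simp add: abs_divide divide_right_mono)
    finally show ?thesis by (simp add: i_def)
  qed
  have bnd: "\<exists>K\<ge>0. \<forall>\<Delta> \<eta>. 0 \<le> \<eta> \<longrightarrow> hyp \<Delta> \<eta> \<longrightarrow> norm (X \<Delta> m - M m *v X \<Delta> 0) \<le> K * \<eta> * D \<Delta>" for m
  proof (induction m)
    case 0
    show ?case by (rule exI[of _ 0]) (simp add: M0)
  next
    case (Suc m)
    then obtain K where K: "K \<ge> 0" "\<And>\<Delta> \<eta>. 0 \<le> \<eta> \<Longrightarrow> hyp \<Delta> \<eta> \<Longrightarrow> norm (X \<Delta> m - M m *v X \<Delta> 0) \<le> K * \<eta> * D \<Delta>"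
      by blast
    define i where "i = Suc m mod k"
    define On where "On = onorm ((*v) (T i))"
    have On0: "On \<ge> 0" unfolding On_def by (rule onorm_pos_le) simp
    show ?case
    proof (intro exI[of _ "1 / \<bar>c i\<bar> + On * K"] conjI allI impI)
      show "0 \<le> 1 / \<bar>c i\<bar> + On * K" using On0 K(1) by simp
      fix \<Delta> \<eta> assume e: "0 \<le> \<eta>" and h: "hyp \<Delta> \<eta>"
      have D0: "D \<Delta> \<ge> 0" by (simp add: D_def sum_nonneg)
      have eq: "X \<Delta> (Suc m) - M (Suc m) *v X \<Delta> 0 = (X \<Delta> (Suc m) - T i *v X \<Delta> m) + T i *v (X \<Delta> m - M m *v X \<Delta> 0)"
        by (simp add: MS i_def matrix_vector_mul_assoc[symmetric] matrix_vector_mult_diff_distrib)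
      have "norm (X \<Delta> (Suc m) - M (Suc m) *v X \<Delta> 0) \<le> norm (X \<Delta> (Suc m) - T i *v X \<Delta> m) + norm (T i *v (X \<Delta> m - M m *v X \<Delta> 0))"
        unfolding eq by (rule norm_triangle_ineq)
      also have "\<dots> \<le> \<eta> * D \<Delta> / \<bar>c i\<bar> + On * (K * \<eta> * D \<Delta>)"
      proof (rule add_mono)
        show "norm (X \<Delta> (Suc m) - T i *v X \<Delta> m) \<le> \<eta> * D \<Delta> / \<bar>c i\<bar>" using step[OF h] by (simp add: i_def)
        have "norm (T i *v (X \<Delta> m - M m *v X \<Delta> 0)) \<le> On * norm (X \<Delta> m - M m *v X \<Delta> 0)"
          unfolding On_def by (rule onorm) simp
        also have "\<dots> \<le> On * (K * \<eta> * D \<Delta>)" using K(2)[OF e h] On0 by (rule mult_left_mono)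
        finally show "norm (T i *v (X \<Delta> m - M m *v X \<Delta> 0)) \<le> On * (K * \<eta> * D \<Delta>)" .
      qed
      also have "\<dots> = (1 / \<bar>c i\<bar> + On * K) * \<eta> * D \<Delta>" by (simp add: algebra_simps)
      finally show "norm (X \<Delta> (Suc m) - M (Suc m) *v X \<Delta> 0) \<le> (1 / \<bar>c i\<bar> + On * K) * \<eta> * D \<Delta>" .
    qed
  qed
  then obtain Kf where Kf: "\<And>m. Kf m \<ge> 0" "\<And>m \<Delta> \<eta>. 0 \<le> \<eta> \<Longrightarrow> hyp \<Delta> \<eta> \<Longrightarrow> norm (X \<Delta> m - M m *v X \<Delta> 0) \<le> Kf m * \<eta> * D \<Delta>"
    by metis
  define KK where "KK = (\<Sum>m\<le>k. Kf m)"
  define OM where "OM = (\<Sum>m<k. onorm ((*v) (M m)))"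
  have KK0: "KK \<ge> 0" by (simp add: KK_def sum_nonneg Kf(1))
  have OM0: "OM \<ge> 0" unfolding OM_def by (intro sum_nonneg onorm_pos_le) simp
  have KfKK: "Kf m \<le> KK" if "m \<le> k" for m
    unfolding KK_def using that by (intro member_le_sum) (auto simp: Kf(1))
  define \<eta>0 where "\<eta>0 = 1 / (2 * (k * KK + 1))"
  have kKK: "real k * KK \<ge> 0" using KK0 by simp
  have \<eta>0: "\<eta>0 > 0" using kKK by (simp add: \<eta>0_def)
  \<comment> \<open>determinant\<close>
  have detM: "det (M m) = (\<Prod>j\<in>{1..m}. a (j mod k) / c (j mod k))" for m
  proof (induction m)
    case 0 then show ?case by (simp add: M0)
  next
    case (Suc m) then show ?case by (simp add: MS det_mul T_def det_Tm prod.cl_ivl_Suc mult.commute)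
  qed
  have "(\<Prod>j\<in>{1..k}. a (j mod k) / c (j mod k)) = (\<Prod>i<k. a i / c i)"
  proof -
    have "{1..k} = insert k {1..<k}" using kpos by auto
    hence "(\<Prod>j\<in>{1..k}. a (j mod k) / c (j mod k)) = a 0 / c 0 * (\<Prod>j\<in>{1..<k}. a (j mod k) / c (j mod k))"
      by simp
    also have "(\<Prod>j\<in>{1..<k}. a (j mod k) / c (j mod k)) = (\<Prod>j\<in>{1..<k}. a j / c j)"
      by (intro prod.cong) auto
    also have "a 0 / c 0 * (\<Prod>j\<in>{1..<k}. a j / c j) = (\<Prod>i<k. a i / c i)"
    proof -
      have "{..<k} = insert 0 {1..<k}" using kpos by auto
      thus ?thesis by simp
    qed
    finally show ?thesis .
  qed
  hence "det (M k) \<noteq> 1" using pnz detM by simp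
  hence "M k \<noteq> mat 1" by auto
  hence "M k - mat 1 \<noteq> 0" by simp
  then obtain i0 j0 where ij: "(M k - mat 1)$i0$j0 \<noteq> 0" by (metis vec_eq_iff zero_index)
  define N where "N = M k - mat 1"
  define \<alpha> where "\<alpha> = N$i0$1"
  define \<beta> where "\<beta> = N$i0$2"
  have ab: "\<alpha> \<noteq> 0 \<or> \<beta> \<noteq> 0" using ij unfolding \<alpha>_def \<beta>_def N_def
    by (metis exhaust_2)
  show ?thesis
  proof (rule exI[of _ \<alpha>], rule exI[of _ \<beta>], rule exI[of _ "2 * KK * OM"], rule exI[of _ \<eta>0], intro conjI ab \<eta>0 allI impI)
    fix \<Delta> :: "nat \<Rightarrow> real" and \<eta> :: real
    assume e0: "0 \<le> \<eta>" and e1: "\<eta> \<le> \<eta>0"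
      and hh: "\<forall>i<k. \<bar>a i * \<Delta> ((i+k-1) mod k) + b i * \<Delta> i + c i * \<Delta> ((i+1) mod k)\<bar> \<le> \<eta> * (\<Sum>j<k. \<bar>\<Delta> j\<bar>)"
    have h: "hyp \<Delta> \<eta>" using hh by (simp add: hyp_def D_def)
    define n0 where "n0 = norm (X \<Delta> 0)"
    have X0: "X \<Delta> 0 = vector [\<Delta> 0, \<Delta> 1]" using k2 by (simp add: X_def)
    have n0: "n0 \<le> \<bar>\<Delta> 0\<bar> + \<bar>\<Delta> 1\<bar>" using norm_vec2_le[of "X \<Delta> 0"] by (simp add: n0_def X0)
    have D0: "D \<Delta> \<ge> 0" by (simp add: D_def sum_nonneg)
    have each: "\<bar>\<Delta> m\<bar> \<le> onorm ((*v) (M m)) * n0 + KK * \<eta> * D \<Delta>" if "m < k" for m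
    proof -
      have "\<bar>\<Delta> m\<bar> = \<bar>(X \<Delta> m)$1\<bar>" using that by (simp add: X_def)
      also have "\<dots> \<le> norm (X \<Delta> m)" by (rule component_le_norm_cart)
      also have "\<dots> \<le> norm (M m *v X \<Delta> 0) + norm (X \<Delta> m - M m *v X \<Delta> 0)"
        by (metis add.commute diff_add_cancel norm_triangle_ineq)
      also have "\<dots> \<le> onorm ((*v) (M m)) * n0 + KK * \<eta> * D \<Delta>"
      proof (rule add_mono)
        show "norm (M m *v X \<Delta> 0) \<le> onorm ((*v) (M m)) * n0" unfolding n0_def by (rule onorm) simp
        have "norm (X \<Delta> m - M m *v X \<Delta> 0) \<le> Kf m * \<eta> * D \<Delta>" by (rule Kf(2)[OF e0 h])
        also have "\<dots> \<le> KK * \<eta> * D \<Delta>" using KfKK[of m] that e0 D0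
          by (intro mult_right_mono) auto
        finally show "norm (X \<Delta> m - M m *v X \<Delta> 0) \<le> KK * \<eta> * D \<Delta>" .
      qed
      finally show ?thesis .
    qed
    have "D \<Delta> \<le> (\<Sum>m<k. onorm ((*v) (M m)) * n0 + KK * \<eta> * D \<Delta>)"
      unfolding D_def[of \<Delta>] using each by (intro sum_mono) (simp add: D_def)
    also have "\<dots> = OM * n0 + k * (KK * \<eta> * D \<Delta>)" by (simp add: OM_def sum.distrib sum_distrib_right)
    finally have Dle: "D \<Delta> \<le> OM * n0 + k * KK * \<eta> * D \<Delta>" by (simp add: mult.assoc)
    have "k * KK * \<eta> \<le> k * KK * \<eta>0" using e1 KK0 by (simp add: mult_left_mono)
    also have "\<dots> \<le> 1/2" using kKK by (simp add: \<eta>0_def field_simps)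
    finally have "k * KK * \<eta> * D \<Delta> \<le> D \<Delta> / 2" using D0
      by (metis mult_right_mono mult.commute times_divide_eq_right mult_1)
    hence Dle2: "D \<Delta> \<le> 2 * OM * n0" using Dle by linarith
    have sk: "Suc k mod k = 1" using k2 by (metis add.commute mod_add_self2 mod_less one_less_numeral_iff order_less_le_trans plus_1_eq_Suc semiring_norm(76))
    have Xk: "X \<Delta> k = X \<Delta> 0" using sk k2 by (simp add: X_def)
    have "\<bar>\<alpha> * \<Delta> 0 + \<beta> * \<Delta> 1\<bar> = \<bar>(N *v X \<Delta> 0)$i0\<bar>"
      by (simp add: X0 matrix_vector_mult_def sum_2 \<alpha>_def \<beta>_def)
    also have "\<dots> \<le> norm (N *v X \<Delta> 0)" by (rule component_le_norm_cart)
    also have "norm (N *v X \<Delta> 0) = norm (X \<Delta> k - M k *v X \<Delta> 0)"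
      by (simp add: N_def Xk matrix_vector_mult_diff_rdistrib norm_minus_commute)
    also have "\<dots> \<le> Kf k * \<eta> * D \<Delta>" by (rule Kf(2)[OF e0 h])
    also have "\<dots> \<le> KK * \<eta> * D \<Delta>" using KfKK[of k] e0 D0 by (intro mult_right_mono) auto
    also have "\<dots> \<le> KK * \<eta> * (2 * OM * n0)" using Dle2 KK0 e0 by (intro mult_left_mono) auto
    also have "\<dots> \<le> KK * \<eta> * (2 * OM * (\<bar>\<Delta> 0\<bar> + \<bar>\<Delta> 1\<bar>))" using n0 KK0 e0 OM0
      by (intro mult_left_mono) auto
    also have "\<dots> = 2 * KK * OM * \<eta> * (\<bar>\<Delta> 0\<bar> + \<bar>\<Delta> 1\<bar>)" by simp
    finally have FF: "\<bar>\<alpha> * \<Delta> 0 + \<beta> * \<Delta> 1\<bar> \<le> 2 * KK * OM * \<eta> * (\<bar>\<Delta> 0\<bar> + \<bar>\<Delta> 1\<bar>)" .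
    then show "\<bar>\<alpha> * \<Delta> 0 + \<beta> * \<Delta> 1\<bar> \<le> 2 * KK * OM * \<eta> * (\<bar>\<Delta> 0\<bar> + \<bar>\<Delta> 1\<bar>)" by simp
  qed
qed

lemma diff_vec_nth[derivative_intros]: "f differentiable F \<Longrightarrow> (\<lambda>x. f x $ i) differentiable F"
  unfolding differentiable_def
  using bounded_linear.has_derivative[OF bounded_linear_vec_nth] by blast

lemma bl_det2_left: "bounded_linear (\<lambda>w. det2 (reflect_dir v w) y)"
proof -
  have "linear (\<lambda>w. det2 (reflect_dir v w) y)"
    by (rule linearI) (simp_all add: det2_def reflect_dir_def inner_add_left algebra_simps add_divide_distrib)
  thus ?thesis by (simp add: linear_conv_bounded_linear)
qed

lemma bl_det2_right: "bounded_linear (\<lambda>z. det2 x z)"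
proof -
  have "linear (\<lambda>z. det2 x z)"
    by (rule linearI) (simp_all add: det2_def algebra_simps)
  thus ?thesis by (simp add: linear_conv_bounded_linear)
qed

definition Fv :: "(real \<Rightarrow> real^2) \<Rightarrow> (real \<Rightarrow> real^2) \<Rightarrow> (real \<Rightarrow> real^2) \<Rightarrow> (real \<Rightarrow> real^2) \<Rightarrow> real \<Rightarrow> real \<Rightarrow> real \<Rightarrow> real" where
  "Fv p q V r s t u = det2 (reflect_dir (V t) (p s - q t)) (r u - q t)"

lemma vertex_expansion:
  fixes p q V r :: "real \<Rightarrow> real^2"
  assumes dp: "(p has_vector_derivative P') (at s0)"
    and dq: "(q has_vector_derivative Q') (at t0)"
    and dV: "(V has_vector_derivative W) (at t0)"
    and dr: "(r has_vector_derivative R') (at u0)"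
    and V0: "V t0 \<noteq> 0"
  shows "\<exists>b. \<forall>\<eta>>0. \<exists>\<rho>>0. \<forall>s t u. \<bar>s-s0\<bar> < \<rho> \<longrightarrow> \<bar>t-t0\<bar> < \<rho> \<longrightarrow> \<bar>u-u0\<bar> < \<rho> \<longrightarrow>
     \<bar>Fv p q V r s t u - Fv p q V r s0 t0 u0 - (det2 (reflect_dir (V t0) P') (r u0 - q t0) * (s-s0) + b * (t-t0)
        + det2 (reflect_dir (V t0) (p s0 - q t0)) R' * (u-u0))\<bar> \<le> \<eta> * (\<bar>s-s0\<bar>+\<bar>t-t0\<bar>+\<bar>u-u0\<bar>)"
proof -
  define G where "G x = Fv p q V r (fst x) (fst (snd x)) (snd (snd x))" for x :: "real \<times> real \<times> real"
  define x0 where "x0 = (s0, t0, u0)"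
  have vv: "V t0 \<bullet> V t0 \<noteq> 0" using V0 by simp
  have Gd: "G differentiable (at x0)"
  proof -
    have cd: "(\<lambda>x. c (g x)) differentiable (at (s0,t0,u0))"
      if "(c has_vector_derivative C') (at (g (s0,t0,u0)))" "g differentiable (at (s0,t0,u0))" for c :: "real \<Rightarrow> real^2" and C' g
      by (rule differentiable_compose[OF _ that(2)]) (use that(1) in \<open>auto simp: has_vector_derivative_def differentiable_def\<close>)
    have fd1: "fst differentiable (at (s0::real,t0::real,u0::real))"
      by (rule bounded_linear_imp_differentiable[OF bounded_linear_fst])
    have fd2: "(\<lambda>x. fst (snd x)) differentiable (at (s0::real,t0::real,u0::real))"
      by (rule bounded_linear_imp_differentiable[OF bounded_linear_compose[OF bounded_linear_fst bounded_linear_snd]])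
    have fd3: "(\<lambda>x. snd (snd x)) differentiable (at (s0::real,t0::real,u0::real))"
      by (rule bounded_linear_imp_differentiable[OF bounded_linear_compose[OF bounded_linear_snd bounded_linear_snd]])
    note fd = fd1 fd2 fd3
    have d1: "(\<lambda>x. p (fst x)) differentiable (at (s0,t0,u0))" using cd[OF _ fd(1)] dp by simp
    have d2: "(\<lambda>x. q (fst (snd x))) differentiable (at (s0,t0,u0))" using cd[OF _ fd(2)] dq by simp
    have d3: "(\<lambda>x. V (fst (snd x))) differentiable (at (s0,t0,u0))" using cd[OF _ fd(2)] dV by simp
    have d4: "(\<lambda>x. r (snd (snd x))) differentiable (at (s0,t0,u0))" using cd[OF _ fd(3)] dr by simp
    define w where "w x = p (fst x) - q (fst (snd x))" for x :: "real\<times>real\<times>real"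
    define v where "v x = V (fst (snd x))" for x :: "real\<times>real\<times>real"
    define z where "z x = r (snd (snd x)) - q (fst (snd x))" for x :: "real\<times>real\<times>real"
    have dw: "w differentiable (at (s0,t0,u0))" unfolding w_def by (rule differentiable_diff[OF d1 d2])
    have dv: "v differentiable (at (s0,t0,u0))" unfolding v_def by (rule d3)
    have dz: "z differentiable (at (s0,t0,u0))" unfolding z_def by (rule differentiable_diff[OF d4 d2])
    have dsig: "(\<lambda>x. 2 * (w x \<bullet> v x) / (v x \<bullet> v x)) differentiable (at (s0,t0,u0))"
      by (rule differentiable_divide) (intro differentiable_mult differentiable_const differentiable_inner dw dv, intro differentiable_inner dv, simp add: v_def vv V0)
    have dR: "(\<lambda>x. (2 * (w x \<bullet> v x) / (v x \<bullet> v x)) *\<^sub>R v x - w x) differentiable (at (s0,t0,u0))"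
      by (intro differentiable_diff differentiable_scaleR dsig dv dw)
    have eq: "G = (\<lambda>x. ((2 * (w x \<bullet> v x) / (v x \<bullet> v x)) *\<^sub>R v x - w x)$1 * z x $2 - ((2 * (w x \<bullet> v x) / (v x \<bullet> v x)) *\<^sub>R v x - w x)$2 * z x $1)"
      by (simp add: fun_eq_iff G_def Fv_def det2_def reflect_dir_def w_def v_def z_def)
    show ?thesis unfolding eq x0_def
      by (intro differentiable_diff differentiable_mult diff_vec_nth dR dz)
  qed
  then obtain D where D: "(G has_derivative D) (at x0)" by (auto simp: differentiable_def)
  have blD: "bounded_linear D" using D by (rule has_derivative_bounded_linear)
  hence linD: "linear D" by (rule bounded_linear.linear)
  define a where "a = det2 (reflect_dir (V t0) P') (r u0 - q t0)"
  define c where "c = det2 (reflect_dir (V t0) (p s0 - q t0)) R'"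
  define b where "b = D (0, 1, 0)"
  \<comment> \<open>partial in s\<close>
  have Da: "D (1, 0, 0) = a"
  proof -
    have i1: "((\<lambda>s. (s, t0, u0)) has_derivative (\<lambda>h. (h, 0, 0))) (at s0)"
      by (intro has_derivative_Pair has_derivative_ident has_derivative_const)
    have c1: "((G \<circ> (\<lambda>s. (s, t0, u0))) has_derivative (D \<circ> (\<lambda>h. (h, 0, 0)))) (at s0)"
      by (rule diff_chain_at[OF i1]) (use D in \<open>simp add: x0_def\<close>)
    have "G \<circ> (\<lambda>s. (s, t0, u0)) = (\<lambda>s. det2 (reflect_dir (V t0) (p s - q t0)) (r u0 - q t0))"
      by (simp add: fun_eq_iff G_def Fv_def)
    moreover have "((\<lambda>s. det2 (reflect_dir (V t0) (p s - q t0)) (r u0 - q t0)) has_derivative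
          (\<lambda>h. det2 (reflect_dir (V t0) (h *\<^sub>R P' - 0)) (r u0 - q t0))) (at s0)"
      by (rule bounded_linear.has_derivative[OF bl_det2_left])
         (intro has_derivative_diff has_derivative_const dp[unfolded has_vector_derivative_def])
    ultimately have "D \<circ> (\<lambda>h. (h, 0, 0)) = (\<lambda>h. det2 (reflect_dir (V t0) (h *\<^sub>R P' - 0)) (r u0 - q t0))"
      using c1 has_derivative_unique by metis
    from fun_cong[OF this, of 1] show ?thesis by (simp add: a_def)
  qed
  have Dc: "D (0, 0, 1) = c"
  proof -
    have i1: "((\<lambda>u. (s0, t0, u)) has_derivative (\<lambda>h. (0, 0, h))) (at u0)"
      by (intro has_derivative_Pair has_derivative_ident has_derivative_const)
    have c1: "((G \<circ> (\<lambda>u. (s0, t0, u))) has_derivative (D \<circ> (\<lambda>h. (0, 0, h)))) (at u0)"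
      by (rule diff_chain_at[OF i1]) (use D in \<open>simp add: x0_def\<close>)
    have "G \<circ> (\<lambda>u. (s0, t0, u)) = (\<lambda>u. det2 (reflect_dir (V t0) (p s0 - q t0)) (r u - q t0))"
      by (simp add: fun_eq_iff G_def Fv_def)
    moreover have "((\<lambda>u. det2 (reflect_dir (V t0) (p s0 - q t0)) (r u - q t0)) has_derivative
          (\<lambda>h. det2 (reflect_dir (V t0) (p s0 - q t0)) (h *\<^sub>R R' - 0))) (at u0)"
      by (rule bounded_linear.has_derivative[OF bl_det2_right])
         (intro has_derivative_diff has_derivative_const dr[unfolded has_vector_derivative_def])
    ultimately have "D \<circ> (\<lambda>h. (0, 0, h)) = (\<lambda>h. det2 (reflect_dir (V t0) (p s0 - q t0)) (h *\<^sub>R R' - 0))"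
      using c1 has_derivative_unique by metis
    from fun_cong[OF this, of 1] show ?thesis by (simp add: c_def)
  qed
  have Dlin: "D (h1, h2, h3) = a * h1 + b * h2 + c * h3" for h1 h2 h3
  proof -
    have "D (h1, h2, h3) = D (h1 *\<^sub>R (1,0,0) + h2 *\<^sub>R (0,1,0) + h3 *\<^sub>R (0,0,1))" by simp
    also have "\<dots> = h1 *\<^sub>R D (1,0,0) + h2 *\<^sub>R D (0,1,0) + h3 *\<^sub>R D (0,0,1)"
      by (simp only: linear_add[OF linD] linear_scale[OF linD])
    finally have "D (h1, h2, h3) = h1 *\<^sub>R D (1,0,0) + h2 *\<^sub>R D (0,1,0) + h3 *\<^sub>R D (0,0,1)" .
    thus ?thesis using Da Dc by (simp add: b_def mult.commute)
  qed
  show ?thesis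
  proof (rule exI[of _ b], intro allI impI)
    fix \<eta> :: real assume e: "\<eta> > 0"
    from D[unfolded has_derivative_at_alt] e obtain d where d: "d > 0"
      "\<And>y. norm (y - x0) < d \<Longrightarrow> norm (G y - G x0 - D (y - x0)) \<le> \<eta> * norm (y - x0)" by blast
    show "\<exists>\<rho>>0. \<forall>s t u. \<bar>s-s0\<bar> < \<rho> \<longrightarrow> \<bar>t-t0\<bar> < \<rho> \<longrightarrow> \<bar>u-u0\<bar> < \<rho> \<longrightarrow>
     \<bar>Fv p q V r s t u - Fv p q V r s0 t0 u0 - (det2 (reflect_dir (V t0) P') (r u0 - q t0) * (s-s0) + b * (t-t0)
        + det2 (reflect_dir (V t0) (p s0 - q t0)) R' * (u-u0))\<bar> \<le> \<eta> * (\<bar>s-s0\<bar>+\<bar>t-t0\<bar>+\<bar>u-u0\<bar>)"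
    proof (intro exI[of _ "d/3"] conjI allI impI)
      show "d/3 > 0" using d by simp
      fix s t u assume h: "\<bar>s-s0\<bar> < d/3" "\<bar>t-t0\<bar> < d/3" "\<bar>u-u0\<bar> < d/3"
      define y where "y = (s, t, u)"
      have ny: "norm (y - x0) \<le> \<bar>s-s0\<bar>+\<bar>t-t0\<bar>+\<bar>u-u0\<bar>"
      proof -
        have "norm (y - x0) \<le> norm (s - s0) + norm (t - t0, u - u0)"
          unfolding y_def x0_def using norm_Pair_le[of "s - s0" "(t - t0, u - u0)"] by simp
        also have "norm (t - t0, u - u0) \<le> norm (t - t0) + norm (u - u0)" by (rule norm_Pair_le)
        finally show ?thesis by simp
      qed
      have "norm (y - x0) < d" using ny h by linarith
      from d(2)[OF this] have "\<bar>G y - G x0 - D (y - x0)\<bar> \<le> \<eta> * norm (y - x0)" by simp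
      also have "\<dots> \<le> \<eta> * (\<bar>s-s0\<bar>+\<bar>t-t0\<bar>+\<bar>u-u0\<bar>)" using ny e by simp
      finally show "\<bar>Fv p q V r s t u - Fv p q V r s0 t0 u0 - (det2 (reflect_dir (V t0) P') (r u0 - q t0) * (s-s0) + b * (t-t0)
        + det2 (reflect_dir (V t0) (p s0 - q t0)) R' * (u-u0))\<bar> \<le> \<eta> * (\<bar>s-s0\<bar>+\<bar>t-t0\<bar>+\<bar>u-u0\<bar>)"
        by (simp add: y_def x0_def G_def Dlin a_def[symmetric] c_def[symmetric])
    qed
  qed
qed

lemma inner2: "(x::real^2) \<bullet> y = x$1* y$1 + x$2* y$2"
  by (simp add: inner_vec_def sum_2)

lemma reflect_1: "reflect_dir v w $ 1 = 2 * (w$1* v$1 + w$2* v$2) / (v$1* v$1 + v$2* v$2) * v$1 - w$1"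
  and reflect_2: "reflect_dir v w $ 2 = 2 * (w$1* v$1 + w$2* v$2) / (v$1* v$1 + v$2* v$2) * v$2 - w$2"
  by (simp_all add: reflect_dir_def inner2)

lemma vv_nz: "(v::real^2) \<noteq> 0 \<Longrightarrow> v$1* v$1 + v$2* v$2 \<noteq> 0"
proof
  assume "v \<noteq> 0" "v$1* v$1 + v$2* v$2 = 0"
  hence "v$1 = 0" "v$2 = 0" by (auto simp: add_nonneg_eq_0_iff)
  hence "v = 0" by (simp add: vec_eq_iff forall_2)
  with \<open>v \<noteq> 0\<close> show False by simp
qed

lemma reflect_invol: assumes "v \<noteq> 0" shows "reflect_dir v (reflect_dir v w) = w"
proof -
  have N: "v \<bullet> v \<noteq> 0" using assms by simp
  define \<sigma> where "\<sigma> = 2 * (w \<bullet> v) / (v \<bullet> v)"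
  have R: "reflect_dir v w = \<sigma> *\<^sub>R v - w" by (simp add: reflect_dir_def \<sigma>_def)
  have "reflect_dir v w \<bullet> v = w \<bullet> v" unfolding R using N
    by (simp add: inner_diff_left \<sigma>_def)
  hence "2 * (reflect_dir v w \<bullet> v) / (v \<bullet> v) = \<sigma>" by (simp add: \<sigma>_def)
  hence "reflect_dir v (reflect_dir v w) = \<sigma> *\<^sub>R v - reflect_dir v w"
    by (simp add: reflect_dir_def)
  thus ?thesis unfolding R by simp
qed

lemma reflect_scale: "reflect_dir v (c *\<^sub>R w) = c *\<^sub>R reflect_dir v w"
  unfolding vec_eq_iff forall_2 by (simp add: reflect_1 reflect_2 field_simps)

lemma reflect_zero: "reflect_dir v 0 = 0"
  using reflect_scale[of v 0 0] by simp

lemma det2_reflect_swap: assumes "v \<noteq> 0" shows "det2 (reflect_dir v a) b = - det2 a (reflect_dir v b)"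
proof -
  have N: "v \<bullet> v \<noteq> 0" using assms by simp
  have e1: "det2 (reflect_dir v a) b = 2 * (a \<bullet> v) / (v \<bullet> v) * det2 v b - det2 a b"
    by (simp add: reflect_dir_def det2_def algebra_simps)
  have e2: "det2 a (reflect_dir v b) = 2 * (b \<bullet> v) / (v \<bullet> v) * det2 a v - det2 a b"
    by (simp add: reflect_dir_def det2_def algebra_simps)
  have key: "(a \<bullet> v) * det2 v b + (b \<bullet> v) * det2 a v = (v \<bullet> v) * det2 a b"
    unfolding inner2 det2_def by algebra
  have "2 * (a \<bullet> v) / (v \<bullet> v) * det2 v b + 2 * (b \<bullet> v) / (v \<bullet> v) * det2 a v = 2 * det2 a b"
  proof -
    have "2 * (a \<bullet> v) / (v \<bullet> v) * det2 v b + 2 * (b \<bullet> v) / (v \<bullet> v) * det2 a v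
        = 2 * ((a \<bullet> v) * det2 v b + (b \<bullet> v) * det2 a v) / (v \<bullet> v)" by (simp add: add_divide_distrib algebra_simps)
    also have "\<dots> = 2 * det2 a b" using N by (simp add: key)
    finally show ?thesis .
  qed
  thus ?thesis unfolding e1 e2 by simp
qed

lemma det2_scale_left: "det2 (c *\<^sub>R a) b = c * det2 a b" and det2_scale_right: "det2 a (c *\<^sub>R b) = c * det2 a b"
  by (simp_all add: det2_def algebra_simps)

lemma det2_anti: "det2 a b = - det2 b a" by (simp add: det2_def)

lemma parallel: assumes "det2 u (y::real^2) = 0" "y \<noteq> 0" shows "\<exists>\<mu>. u = \<mu> *\<^sub>R y"
proof (cases "y$1 = 0")
  case True
  hence y2: "y$2 \<noteq> 0" using assms(2) by (auto simp: vec_eq_iff forall_2)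
  have "u$1 = 0" using assms(1) True y2 by (simp add: det2_def)
  thus ?thesis using True y2 by (intro exI[of _ "u$2/y$2"]) (simp add: vec_eq_iff forall_2)
next
  case False
  have "u$1* y$2 = u$2* y$1" using assms(1) by (simp add: det2_def)
  thus ?thesis using False by (intro exI[of _ "u$1/y$1"]) (auto simp: vec_eq_iff forall_2 field_simps)
qed

lemma sign_vertex:
  assumes v: "v \<noteq> 0" and x: "x \<noteq> 0" and y: "y \<noteq> 0" and r: "det2 (reflect_dir v x) y = 0"
  shows "det2 (reflect_dir v VP) y * det2 (reflect_dir v x) VN = det2 VP x * det2 VN y"
proof -
  obtain \<mu> where mu: "reflect_dir v x = \<mu> *\<^sub>R y" using parallel[OF r y] by blast
  have mu0: "\<mu> \<noteq> 0"
  proof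
    assume "\<mu> = 0"
    hence "reflect_dir v (reflect_dir v x) = 0" using mu by (simp add: reflect_zero)
    thus False using reflect_invol[OF v] x by simp
  qed
  have "x = \<mu> *\<^sub>R reflect_dir v y"
    using reflect_invol[OF v, of x] mu by (simp add: reflect_scale)
  hence Ry: "reflect_dir v y = (1/\<mu>) *\<^sub>R x" using mu0 by simp
  have "det2 (reflect_dir v VP) y = - (1/\<mu>) * det2 VP x"
    using det2_reflect_swap[OF v, of VP y] Ry by (simp add: det2_scale_right)
  moreover have "det2 (reflect_dir v x) VN = - \<mu> * det2 VN y"
    unfolding mu det2_scale_left by (simp add: det2_anti[of y VN])
  ultimately show ?thesis using mu0 by simp
qed

lemma prod_neg_odd:
  fixes x :: "nat \<Rightarrow> real"
  assumes "finite J" "\<forall>j\<in>J. x j \<noteq> 0"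
  shows "prod x J < 0 \<longleftrightarrow> odd (card {j\<in>J. x j < 0})"
  using assms
proof (induction J rule: finite_induct)
  case empty then show ?case by simp
next
  case (insert a J)
  have fin: "finite {j\<in>J. x j < 0}" using insert(1) by simp
  have xa: "x a \<noteq> 0" using insert by simp
  have IH: "prod x J < 0 \<longleftrightarrow> odd (card {j\<in>J. x j < 0})" using insert by simp
  have pJ: "prod x J \<noteq> 0" using insert by (simp add: prod_zero_iff)
  show ?case
  proof (cases "x a < 0")
    case True
    have "{j\<in>insert a J. x j < 0} = insert a {j\<in>J. x j < 0}" using True by auto
    hence c: "card {j\<in>insert a J. x j < 0} = Suc (card {j\<in>J. x j < 0})" using insert(2) fin by simp
    have "prod x (insert a J) = x a * prod x J" using insert by simp
    thus ?thesis using c IH True pJ by (auto simp: mult_less_0_iff)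
  next
    case False
    hence xa': "x a > 0" using xa by simp
    have "{j\<in>insert a J. x j < 0} = {j\<in>J. x j < 0}" using False by auto
    moreover have "prod x (insert a J) = x a * prod x J" using insert by simp
    ultimately show ?thesis using IH xa' by (simp add: mult_less_0_iff)
  qed
qed

lemma finite_min:
  fixes k :: nat
  assumes "\<forall>i<k. \<exists>r>0. P i (r::real)" "\<And>i r r'. P i r \<Longrightarrow> 0 < r' \<Longrightarrow> r' \<le> r \<Longrightarrow> P i r'"
  shows "\<exists>r>0. \<forall>i<k. P i r"
  using assms(1)
proof (induction k)
  case 0 then show ?case by (auto intro: exI[of _ 1])
next
  case (Suc k)
  then obtain r where r: "r > 0" "\<forall>i<k. P i r" by auto
  obtain r' where r': "r' > 0" "P k r'" using Suc.prems by auto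
  show ?case
  proof (intro exI[of _ "min r r'"] conjI allI impI)
    show "min r r' > 0" using r r' by simp
    fix i assume "i < Suc k"
    thus "P i (min r r')"
      using r r' assms(2)[of i r "min r r'"] assms(2)[of i r' "min r r'"] by (cases "i = k") auto
  qed
qed

lemma abs3: "(X::real) = A + B + C \<Longrightarrow> \<bar>X\<bar> \<le> \<bar>A\<bar> + \<bar>B\<bar> + \<bar>C\<bar>" by arith

lemma cover_null:
  fixes E :: "(nat \<Rightarrow> real) set" and k :: nat
  assumes cone: "\<And>t. t \<in> E \<Longrightarrow> \<exists>\<alpha> \<beta>. \<bar>\<alpha>\<bar> + \<bar>\<beta>\<bar> = 1 \<and> (\<forall>\<eta>>0. \<exists>\<rho>>0. \<forall>t'\<in>E. (\<forall>j<k. \<bar>t' j - t j\<bar> < \<rho>) \<longrightarrow>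
            \<bar>\<alpha> * (t' 0 - t 0) + \<beta> * (t' 1 - t 1)\<bar> \<le> \<eta> * (\<bar>t' 0 - t 0\<bar> + \<bar>t' 1 - t 1\<bar>))"
  shows "(\<lambda>t. (t 0, t 1)) ` E \<in> null_sets lebesgue"
proof -
  define P where "P = (\<lambda>(m::nat, (q1::real, q2::real), c::nat \<Rightarrow> real). {t\<in>E. (\<forall>j<k. \<bar>t j - c j\<bar> < 1/(2*Suc m)) \<and>
     (\<forall>t'\<in>E. (\<forall>j<k. \<bar>t' j - t j\<bar> < 1/Suc m) \<longrightarrow> \<bar>q1*(t' 0 - t 0) + q2*(t' 1 - t 1)\<bar> \<le> (\<bar>t' 0 - t 0\<bar> + \<bar>t' 1 - t 1\<bar>)/8)})"
  define I where "I = (UNIV::nat set) \<times> ((\<rat> \<times> \<rat>) \<inter> {(q1::real,q2::real). \<bar>q1\<bar> + \<bar>q2\<bar> \<ge> 7/8}) \<times> (Pi\<^sub>E {..<k} (\<lambda>_. \<rat>::real set))"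
  have cI: "countable I" unfolding I_def
    by (intro countable_SIGMA countable_Int1 countable_PiE) (auto simp: countable_rat)
  have nullP: "(\<lambda>t. (t 0, t 1)) ` P i \<in> null_sets lebesgue" if "i \<in> I" for i
  proof -
    obtain m q1 q2 c where i: "i = (m, (q1, q2), c)" by (cases i) auto
    have q: "\<bar>q1\<bar> + \<bar>q2\<bar> \<ge> 7/8" using that i by (auto simp: I_def)
    show ?thesis
    proof (rule cone_null[OF q])
      fix x y assume "x \<in> (\<lambda>t. (t 0, t 1)) ` P i" "y \<in> (\<lambda>t. (t 0, t 1)) ` P i"
      then obtain t t' where tt: "t \<in> P i" "t' \<in> P i" "x = (t 0, t 1)" "y = (t' 0, t' 1)" by auto
      have near: "\<forall>j<k. \<bar>t j - t' j\<bar> < 1/Suc m"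
      proof (intro allI impI)
        fix j assume "j < k"
        hence "\<bar>t j - c j\<bar> < 1/(2*Suc m)" "\<bar>t' j - c j\<bar> < 1/(2*Suc m)" using tt(1,2) by (auto simp: P_def i)
        moreover have "\<bar>t j - t' j\<bar> \<le> \<bar>t j - c j\<bar> + \<bar>t' j - c j\<bar>" by arith
        ultimately have "\<bar>t j - t' j\<bar> < 2 * (1/(2*Suc m))" by linarith
        moreover have "2 * (1/(2*Suc m)) = 1/(Suc m)" by (simp add: divide_simps)
        ultimately show "\<bar>t j - t' j\<bar> < 1/Suc m" by (smt (verit))
      qed
      have "t \<in> E" using tt by (auto simp: P_def i)
      hence "\<bar>q1*(t 0 - t' 0) + q2*(t 1 - t' 1)\<bar> \<le> (\<bar>t 0 - t' 0\<bar> + \<bar>t 1 - t' 1\<bar>)/8"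
        using tt(2) near by (auto simp: P_def i)
      thus "\<bar>q1 * (fst x - fst y) + q2 * (snd x - snd y)\<bar> \<le> (\<bar>fst x - fst y\<bar> + \<bar>snd x - snd y\<bar>) / 8"
        using tt by simp
    qed
  qed
  have sub: "(\<lambda>t. (t 0, t 1)) ` E \<subseteq> (\<Union>i\<in>I. (\<lambda>t. (t 0, t 1)) ` P i)"
  proof
    fix x assume "x \<in> (\<lambda>t. (t 0, t 1)) ` E"
    then obtain t where t: "t \<in> E" "x = (t 0, t 1)" by auto
    obtain \<alpha> \<beta> where ab: "\<bar>\<alpha>\<bar> + \<bar>\<beta>\<bar> = 1" and H: "\<And>\<eta>. \<eta> > 0 \<Longrightarrow> \<exists>\<rho>>0. \<forall>t'\<in>E. (\<forall>j<k. \<bar>t' j - t j\<bar> < \<rho>) \<longrightarrow>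
            \<bar>\<alpha> * (t' 0 - t 0) + \<beta> * (t' 1 - t 1)\<bar> \<le> \<eta> * (\<bar>t' 0 - t 0\<bar> + \<bar>t' 1 - t 1\<bar>)"
      using cone[OF t(1)] by blast
    obtain \<rho> where \<rho>: "\<rho> > 0" "\<And>t'. t' \<in> E \<Longrightarrow> (\<forall>j<k. \<bar>t' j - t j\<bar> < \<rho>) \<Longrightarrow>
            \<bar>\<alpha> * (t' 0 - t 0) + \<beta> * (t' 1 - t 1)\<bar> \<le> 1/16 * (\<bar>t' 0 - t 0\<bar> + \<bar>t' 1 - t 1\<bar>)"
      using H[of "1/16"] by auto
    obtain m where m: "inverse (real (Suc m)) < \<rho>" using reals_Archimedean[OF \<rho>(1)] by blast
    obtain q1 where q1: "q1 \<in> \<rat>" "\<alpha> - 1/16 < q1" "q1 < \<alpha> + 1/16" using Rats_dense_in_real[of "\<alpha> - 1/16" "\<alpha> + 1/16"] by auto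
    obtain q2 where q2: "q2 \<in> \<rat>" "\<beta> - 1/16 < q2" "q2 < \<beta> + 1/16" using Rats_dense_in_real[of "\<beta> - 1/16" "\<beta> + 1/16"] by auto
    define \<delta> where "\<delta> = 1/(2*real (Suc m))"
    have \<delta>: "\<delta> > 0" by (simp add: \<delta>_def)
    have "\<forall>j. \<exists>r. r \<in> \<rat> \<and> \<bar>t j - r\<bar> < \<delta>"
    proof
      fix j
      obtain r where "r \<in> \<rat>" "t j - \<delta> < r" "r < t j + \<delta>" using Rats_dense_in_real[of "t j - \<delta>" "t j + \<delta>"] \<delta> by auto
      thus "\<exists>r. r \<in> \<rat> \<and> \<bar>t j - r\<bar> < \<delta>" by (intro exI[of _ r]) auto
    qed
    then obtain cf where cf: "\<And>j. cf j \<in> \<rat>" "\<And>j. \<bar>t j - cf j\<bar> < \<delta>" by metis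
    define c where "c = restrict cf {..<k}"
    have iI: "(m, (q1, q2), c) \<in> I"
    proof -
      have "\<bar>q1\<bar> + \<bar>q2\<bar> \<ge> 7/8" using ab q1 q2 by linarith
      moreover have "c \<in> Pi\<^sub>E {..<k} (\<lambda>_. \<rat>)" unfolding c_def using cf(1) by (simp add: restrict_PiE_iff)
      ultimately show ?thesis using q1 q2 by (simp add: I_def)
    qed
    have "t \<in> P (m, (q1, q2), c)"
    proof -
      have "\<forall>j<k. \<bar>t j - c j\<bar> < 1/(2*Suc m)" using cf(2) by (simp add: c_def \<delta>_def)
      moreover have "\<bar>q1*(t' 0 - t 0) + q2*(t' 1 - t 1)\<bar> \<le> (\<bar>t' 0 - t 0\<bar> + \<bar>t' 1 - t 1\<bar>)/8"
        if "t' \<in> E" "\<forall>j<k. \<bar>t' j - t j\<bar> < 1/Suc m" for t'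
      proof -
        have "\<forall>j<k. \<bar>t' j - t j\<bar> < \<rho>" using that(2) m by (auto simp: inverse_eq_divide)
        hence h: "\<bar>\<alpha> * (t' 0 - t 0) + \<beta> * (t' 1 - t 1)\<bar> \<le> 1/16 * (\<bar>t' 0 - t 0\<bar> + \<bar>t' 1 - t 1\<bar>)"
          using \<rho>(2)[OF that(1)] by blast
        have e1: "\<bar>(q1 - \<alpha>) * (t' 0 - t 0)\<bar> \<le> 1/16 * \<bar>t' 0 - t 0\<bar>" proof -
          have "\<bar>q1 - \<alpha>\<bar> \<le> 1/16" using q1 by arith
          thus ?thesis unfolding abs_mult by (rule mult_right_mono) simp
        qed
        have e2: "\<bar>(q2 - \<beta>) * (t' 1 - t 1)\<bar> \<le> 1/16 * \<bar>t' 1 - t 1\<bar>" proof -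
          have "\<bar>q2 - \<beta>\<bar> \<le> 1/16" using q2 by arith
          thus ?thesis unfolding abs_mult by (rule mult_right_mono) simp
        qed
        have "q1*(t' 0 - t 0) + q2*(t' 1 - t 1) = (\<alpha> * (t' 0 - t 0) + \<beta> * (t' 1 - t 1)) + (q1 - \<alpha>) * (t' 0 - t 0) + (q2 - \<beta>) * (t' 1 - t 1)"
          by (simp add: algebra_simps)
        hence "\<bar>q1*(t' 0 - t 0) + q2*(t' 1 - t 1)\<bar> \<le> \<bar>\<alpha> * (t' 0 - t 0) + \<beta> * (t' 1 - t 1)\<bar> + \<bar>(q1 - \<alpha>) * (t' 0 - t 0)\<bar> + \<bar>(q2 - \<beta>) * (t' 1 - t 1)\<bar>"
          by (rule abs3)
        also have "\<dots> \<le> 1/16 * (\<bar>t' 0 - t 0\<bar> + \<bar>t' 1 - t 1\<bar>) + 1/16 * \<bar>t' 0 - t 0\<bar> + 1/16 * \<bar>t' 1 - t 1\<bar>"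
          using h e1 e2 by (intro add_mono)
        also have "\<dots> = (\<bar>t' 0 - t 0\<bar> + \<bar>t' 1 - t 1\<bar>)/8" by (simp add: field_simps)
        finally show ?thesis .
      qed
      ultimately show ?thesis using t(1) by (simp add: P_def)
    qed
    thus "x \<in> (\<Union>i\<in>I. (\<lambda>t. (t 0, t 1)) ` P i)" using iI t(2) by blast
  qed
  have "(\<Union>i\<in>I. (\<lambda>t. (t 0, t 1)) ` P i) \<in> null_sets lebesgue"
    by (rule null_sets_UN'[OF cI nullP])
  thus ?thesis using null_sets_completion_subset[OF sub] by simp
qed

lemma mod_pr_nx:
  fixes k i :: nat assumes k: "k > 0" and i: "i < k"
  shows "((i + k - 1) mod k + 1) mod k = i" and "((i + 1) mod k + k - 1) mod k = i"
proof -
  have "((i + k - 1) mod k + 1) mod k = (i + k - 1 + 1) mod k" by (metis mod_add_left_eq)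
  also have "i + k - 1 + 1 = i + k" using k by simp
  finally show "((i + k - 1) mod k + 1) mod k = i" using i by simp
  have "(i + 1) mod k + k - 1 = (i + 1) mod k + (k - 1)" using k by simp
  hence "((i + 1) mod k + k - 1) mod k = ((i + 1) + (k - 1)) mod k" by (simp add: mod_add_left_eq)
  also have "(i + 1) + (k - 1) = i + k" using k by simp
  finally show "((i + 1) mod k + k - 1) mod k = i" using i by simp
qed

lemma C3_facts:
  assumes "C3_on S \<gamma>" "open S" "x \<in> S"
  shows "(\<gamma> has_vector_derivative vector_derivative \<gamma> (at x)) (at x)"
    and "\<exists>W. ((\<lambda>s. vector_derivative \<gamma> (at s)) has_vector_derivative W) (at x)"
proof -
  obtain \<gamma>1 \<gamma>2 where d1: "\<forall>t\<in>S. (\<gamma> has_vector_derivative \<gamma>1 t) (at t)"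
    and d2: "\<forall>t\<in>S. (\<gamma>1 has_vector_derivative \<gamma>2 t) (at t)"
    using assms(1) unfolding C3_on_def by blast
  have vd: "vector_derivative \<gamma> (at s) = \<gamma>1 s" if "s \<in> S" for s
    using d1 that vector_derivative_at by blast
  show "(\<gamma> has_vector_derivative vector_derivative \<gamma> (at x)) (at x)"
    using d1 assms(3) vd by simp
  show "\<exists>W. ((\<lambda>s. vector_derivative \<gamma> (at s)) has_vector_derivative W) (at x)"
    by (rule exI, rule has_vector_derivative_transform_within_open[OF _ assms(2,3)])
       (use d2 assms(3) vd in auto)
qed

lemma C3_mono: "C3_on S \<gamma> \<Longrightarrow> S' \<subseteq> S \<Longrightarrow> C3_on S' \<gamma>"
  unfolding C3_on_def by (meson continuous_on_subset subsetD)

lemma cone_at_orbit: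
  fixes k :: nat and \<gamma> :: "nat \<Rightarrow> real \<Rightarrow> real^2" and skew :: "nat \<Rightarrow> bool" and t :: "nat \<Rightarrow> real"
    and E :: "(nat \<Rightarrow> real) set"
  assumes k3: "k \<ge> 3" and odd: "odd (card {j. j < k \<and> skew j})"
    and D1: "\<And>j. j < k \<Longrightarrow> (\<gamma> j has_vector_derivative vector_derivative (\<gamma> j) (at (t j))) (at (t j))"
    and D2: "\<And>j. j < k \<Longrightarrow> \<exists>W. ((\<lambda>s. vector_derivative (\<gamma> j) (at s)) has_vector_derivative W) (at (t j))"
    and orb: "periodic_orbit k \<gamma> skew t"
    and EE: "\<And>t'. t' \<in> E \<Longrightarrow> periodic_orbit k \<gamma> skew t'"
  shows "\<exists>\<alpha> \<beta>. \<bar>\<alpha>\<bar> + \<bar>\<beta>\<bar> = 1 \<and> (\<forall>\<eta>>0. \<exists>\<rho>>0. \<forall>t'\<in>E. (\<forall>j<k. \<bar>t' j - t j\<bar> < \<rho>) \<longrightarrow>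
            \<bar>\<alpha> * (t' 0 - t 0) + \<beta> * (t' 1 - t 1)\<bar> \<le> \<eta> * (\<bar>t' 0 - t 0\<bar> + \<bar>t' 1 - t 1\<bar>))"
proof -
  define pr where "pr j = (j + k - 1) mod k" for j
  define nx where "nx j = (j + 1) mod k" for j
  define A where "A j = \<gamma> j (t j)" for j
  define Vt where "Vt j = vector_derivative (\<gamma> j) (at (t j))" for j
  define a where "a j = det2 (reflect_dir (Vt j) (Vt (pr j))) (A (nx j) - A j)" for j
  define c where "c j = det2 (reflect_dir (Vt j) (A (pr j) - A j)) (Vt (nx j))" for j
  have kpos: "k > 0" using k3 by simp
  have prk: "pr j < k" and nxk: "nx j < k" for j using kpos by (simp_all add: pr_def nx_def)
  have nxpr: "nx (pr j) = j" and prnx: "pr (nx j) = j" if "j < k" for j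
    using mod_pr_nx[OF kpos that] by (simp_all add: pr_def nx_def)
  have rl: "refl_law (skew j) (Vt j) (A j) (A (pr j)) (A (nx j))" if "j < k" for j
    using orb that by (simp add: periodic_orbit_def vertex_ok_def Vt_def A_def pr_def nx_def)
  have Vnz: "Vt j \<noteq> 0" if "j < k" for j
  proof
    assume "Vt j = 0"
    hence "det2 (Vt j) (A (pr j) - A j) = 0" by (simp add: det2_def)
    thus False using rl[OF that] by (simp add: refl_law_def)
  qed
  define \<tau> where "\<tau> l m = det2 (Vt l) (A l - A m)" for l m
  have ac: "a j * c j = \<tau> (pr j) j * \<tau> (nx j) j" if "j < k" for j
  proof -
    have r: "A j \<noteq> A (pr j)" "A j \<noteq> A (nx j)" "det2 (reflect_dir (Vt j) (A (pr j) - A j)) (A (nx j) - A j) = 0"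
      using rl[OF that] by (simp_all add: refl_law_def)
    show ?thesis unfolding a_def c_def \<tau>_def
      by (rule sign_vertex[OF Vnz[OF that]]) (use r in auto)
  qed
  define xx where "xx l = \<tau> l (pr l) * \<tau> l (nx l)" for l
  have xx_eq: "xx l = det2 (Vt l) (A (pr l) - A l) * det2 (Vt l) (A (nx l) - A l)" for l
    by (simp add: xx_def \<tau>_def det2_def algebra_simps)
  have xx_sk: "xx l < 0 \<longleftrightarrow> skew l" if "l < k" for l
    using rl[OF that] unfolding refl_law_def xx_eq[symmetric] by (cases "skew l") auto
  have xx_nz: "xx l \<noteq> 0" if "l < k" for l
    using rl[OF that] unfolding refl_law_def xx_eq[symmetric] by (cases "skew l") auto
  have p1: "(\<Prod>j<k. \<tau> (pr j) j) = (\<Prod>l<k. \<tau> l (nx l))"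
    by (rule prod.reindex_bij_witness[where i=nx and j=pr]) (auto simp: nxpr prnx prk nxk)
  have p2: "(\<Prod>j<k. \<tau> (nx j) j) = (\<Prod>l<k. \<tau> l (pr l))"
    by (rule prod.reindex_bij_witness[where i=pr and j=nx]) (auto simp: nxpr prnx prk nxk)
  have prod_ac: "(\<Prod>j<k. a j * c j) = (\<Prod>l<k. xx l)"
  proof -
    have "(\<Prod>j<k. a j * c j) = (\<Prod>j<k. \<tau> (pr j) j * \<tau> (nx j) j)" by (rule prod.cong) (auto simp: ac)
    also have "\<dots> = (\<Prod>j<k. \<tau> (pr j) j) * (\<Prod>j<k. \<tau> (nx j) j)" by (rule prod.distrib)
    also have "\<dots> = (\<Prod>l<k. \<tau> l (nx l)) * (\<Prod>l<k. \<tau> l (pr l))" by (simp add: p1 p2)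
    also have "\<dots> = (\<Prod>l<k. xx l)" by (simp add: xx_def prod.distrib mult.commute)
    finally show ?thesis .
  qed
  have "{j\<in>{..<k}. xx j < 0} = {j. j < k \<and> skew j}" using xx_sk by auto
  hence neg: "(\<Prod>l<k. xx l) < 0" using prod_neg_odd[of "{..<k}" xx] xx_nz odd by simp
  have acnz: "a j * c j \<noteq> 0" if "j < k" for j
  proof
    assume "a j * c j = 0"
    hence "(\<Prod>j<k. a j * c j) = 0" using that by (intro prod_zero) auto
    thus False using prod_ac neg by linarith
  qed
  have cnz: "\<forall>i<k. c i \<noteq> 0" using acnz by auto
  have pnz: "(\<Prod>i<k. a i / c i) \<noteq> 1"
  proof -
    have "(\<Prod>i<k. a i / c i) = (\<Prod>i<k. (a i * c i) / (c i * c i))"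
      by (rule prod.cong) (use cnz in auto)
    also have "\<dots> = (\<Prod>i<k. a i * c i) / (\<Prod>i<k. c i * c i)" by (rule prod_dividef)
    finally have e: "(\<Prod>i<k. a i / c i) = (\<Prod>i<k. a i * c i) / (\<Prod>i<k. c i * c i)" .
    have "(\<Prod>i<k. c i * c i) > 0" using cnz by (intro prod_pos) (auto simp: not_square_less_zero zero_less_mult_iff)
    hence "(\<Prod>i<k. a i / c i) < 0" unfolding e using prod_ac neg by (simp add: divide_neg_pos)
    thus ?thesis by simp
  qed
  \<comment> \<open>first-order expansions at each vertex\<close>
  define Fj where "Fj j = Fv (\<gamma> (pr j)) (\<gamma> j) (\<lambda>s. vector_derivative (\<gamma> j) (at s)) (\<gamma> (nx j))" for j
  have exps: "\<exists>b. \<forall>\<eta>>0. \<exists>\<rho>>0. \<forall>s u w. \<bar>s - t (pr j)\<bar> < \<rho> \<longrightarrow> \<bar>u - t j\<bar> < \<rho> \<longrightarrow> \<bar>w - t (nx j)\<bar> < \<rho> \<longrightarrow>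
     \<bar>Fj j s u w - Fj j (t (pr j)) (t j) (t (nx j)) - (a j * (s - t (pr j)) + b * (u - t j) + c j * (w - t (nx j)))\<bar>
       \<le> \<eta> * (\<bar>s - t (pr j)\<bar> + \<bar>u - t j\<bar> + \<bar>w - t (nx j)\<bar>)" if jk: "j < k" for j
  proof -
    obtain W where W: "((\<lambda>s. vector_derivative (\<gamma> j) (at s)) has_vector_derivative W) (at (t j))"
      using D2[OF jk] by blast
    show ?thesis
      using vertex_expansion[OF D1[OF prk] D1[OF jk] W D1[OF nxk], of j j] Vnz[OF jk]
      unfolding Fj_def a_def c_def Vt_def A_def by simp
  qed
  then obtain bf where bf: "\<And>j. j < k \<Longrightarrow> \<forall>\<eta>>0. \<exists>\<rho>>0. \<forall>s u w. \<bar>s - t (pr j)\<bar> < \<rho> \<longrightarrow> \<bar>u - t j\<bar> < \<rho> \<longrightarrow> \<bar>w - t (nx j)\<bar> < \<rho> \<longrightarrow>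
     \<bar>Fj j s u w - Fj j (t (pr j)) (t j) (t (nx j)) - (a j * (s - t (pr j)) + bf j * (u - t j) + c j * (w - t (nx j)))\<bar>
       \<le> \<eta> * (\<bar>s - t (pr j)\<bar> + \<bar>u - t j\<bar> + \<bar>w - t (nx j)\<bar>)"
    by metis
  have F0: "Fj j (t' (pr j)) (t' j) (t' (nx j)) = 0" if "periodic_orbit k \<gamma> skew t'" "j < k" for t' j
    using that unfolding periodic_orbit_def vertex_ok_def refl_law_def Fj_def Fv_def pr_def nx_def by auto
  have k2: "k \<ge> 2" using k3 by simp
  obtain \<alpha> \<beta> C \<eta>0 where ab: "\<alpha> \<noteq> 0 \<or> \<beta> \<noteq> 0" and \<eta>0: "\<eta>0 > 0"
    and TR: "\<And>\<Delta> \<eta>. 0 \<le> \<eta> \<Longrightarrow> \<eta> \<le> \<eta>0 \<Longrightarrow>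
     (\<forall>i<k. \<bar>a i * \<Delta> ((i+k-1) mod k) + bf i * \<Delta> i + c i * \<Delta> ((i+1) mod k)\<bar> \<le> \<eta> * (\<Sum>j<k. \<bar>\<Delta> j\<bar>)) \<Longrightarrow>
     \<bar>\<alpha> * \<Delta> 0 + \<beta> * \<Delta> 1\<bar> \<le> C * \<eta> * (\<bar>\<Delta> 0\<bar> + \<bar>\<Delta> 1\<bar>)"
    using transfer[OF k2 cnz pnz, of bf] by blast
  have unnorm: "\<exists>\<rho>>0. \<forall>t'\<in>E. (\<forall>j<k. \<bar>t' j - t j\<bar> < \<rho>) \<longrightarrow>
            \<bar>\<alpha> * (t' 0 - t 0) + \<beta> * (t' 1 - t 1)\<bar> \<le> \<eta> * (\<bar>t' 0 - t 0\<bar> + \<bar>t' 1 - t 1\<bar>)" if e: "\<eta> > 0" for \<eta>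
  proof -
    define \<eta>1 where "\<eta>1 = min \<eta>0 (\<eta> / (\<bar>C\<bar> + 1))"
    have \<eta>1: "\<eta>1 > 0" using \<eta>0 e by (simp add: \<eta>1_def)
    have "\<forall>j<k. \<exists>\<rho>>0. \<forall>s u w. \<bar>s - t (pr j)\<bar> < \<rho> \<longrightarrow> \<bar>u - t j\<bar> < \<rho> \<longrightarrow> \<bar>w - t (nx j)\<bar> < \<rho> \<longrightarrow>
     \<bar>Fj j s u w - Fj j (t (pr j)) (t j) (t (nx j)) - (a j * (s - t (pr j)) + bf j * (u - t j) + c j * (w - t (nx j)))\<bar>
       \<le> \<eta>1/3 * (\<bar>s - t (pr j)\<bar> + \<bar>u - t j\<bar> + \<bar>w - t (nx j)\<bar>)"
    proof (intro allI impI)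
      fix j assume j: "j < k"
      have "\<eta>1/3 > 0" using \<eta>1 by simp
      thus "\<exists>\<rho>>0. \<forall>s u w. \<bar>s - t (pr j)\<bar> < \<rho> \<longrightarrow> \<bar>u - t j\<bar> < \<rho> \<longrightarrow> \<bar>w - t (nx j)\<bar> < \<rho> \<longrightarrow>
     \<bar>Fj j s u w - Fj j (t (pr j)) (t j) (t (nx j)) - (a j * (s - t (pr j)) + bf j * (u - t j) + c j * (w - t (nx j)))\<bar>
       \<le> \<eta>1/3 * (\<bar>s - t (pr j)\<bar> + \<bar>u - t j\<bar> + \<bar>w - t (nx j)\<bar>)"
        using bf[OF j] by blast
    qed
    then obtain \<rho> where \<rho>: "\<rho> > 0" and R: "\<forall>j<k. \<forall>s u w. \<bar>s - t (pr j)\<bar> < \<rho> \<longrightarrow> \<bar>u - t j\<bar> < \<rho> \<longrightarrow> \<bar>w - t (nx j)\<bar> < \<rho> \<longrightarrow>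
     \<bar>Fj j s u w - Fj j (t (pr j)) (t j) (t (nx j)) - (a j * (s - t (pr j)) + bf j * (u - t j) + c j * (w - t (nx j)))\<bar>
       \<le> \<eta>1/3 * (\<bar>s - t (pr j)\<bar> + \<bar>u - t j\<bar> + \<bar>w - t (nx j)\<bar>)"
      using finite_min[where P="\<lambda>j \<rho>. \<forall>s u w. \<bar>s - t (pr j)\<bar> < \<rho> \<longrightarrow> \<bar>u - t j\<bar> < \<rho> \<longrightarrow> \<bar>w - t (nx j)\<bar> < \<rho> \<longrightarrow>
     \<bar>Fj j s u w - Fj j (t (pr j)) (t j) (t (nx j)) - (a j * (s - t (pr j)) + bf j * (u - t j) + c j * (w - t (nx j)))\<bar>
       \<le> \<eta>1/3 * (\<bar>s - t (pr j)\<bar> + \<bar>u - t j\<bar> + \<bar>w - t (nx j)\<bar>)" and k=k] by force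
    show ?thesis
    proof (intro exI[of _ \<rho>] conjI \<rho> ballI impI)
      fix t' assume t'E: "t' \<in> E" and near: "\<forall>j<k. \<bar>t' j - t j\<bar> < \<rho>"
      define \<Delta> where "\<Delta> j = t' j - t j" for j
      have orb': "periodic_orbit k \<gamma> skew t'" using EE[OF t'E] .
      have hyp: "\<forall>i<k. \<bar>a i * \<Delta> ((i+k-1) mod k) + bf i * \<Delta> i + c i * \<Delta> ((i+1) mod k)\<bar> \<le> \<eta>1 * (\<Sum>j<k. \<bar>\<Delta> j\<bar>)"
      proof (intro allI impI)
        fix i assume i: "i < k"
        have "\<bar>Fj i (t' (pr i)) (t' i) (t' (nx i)) - Fj i (t (pr i)) (t i) (t (nx i)) - (a i * (t' (pr i) - t (pr i)) + bf i * (t' i - t i) + c i * (t' (nx i) - t (nx i)))\<bar>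
           \<le> \<eta>1/3 * (\<bar>t' (pr i) - t (pr i)\<bar> + \<bar>t' i - t i\<bar> + \<bar>t' (nx i) - t (nx i)\<bar>)"
          using R i near prk nxk by blast
        hence "\<bar>0 - 0 - (a i * \<Delta> (pr i) + bf i * \<Delta> i + c i * \<Delta> (nx i))\<bar> \<le> \<eta>1/3 * (\<bar>\<Delta> (pr i)\<bar> + \<bar>\<Delta> i\<bar> + \<bar>\<Delta> (nx i)\<bar>)"
          unfolding F0[OF orb' i] F0[OF orb i] \<Delta>_def .
        hence h: "\<bar>a i * \<Delta> (pr i) + bf i * \<Delta> i + c i * \<Delta> (nx i)\<bar> \<le> \<eta>1/3 * (\<bar>\<Delta> (pr i)\<bar> + \<bar>\<Delta> i\<bar> + \<bar>\<Delta> (nx i)\<bar>)"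
          by (simp only: diff_zero diff_0 abs_minus_cancel)
        have s1: "\<bar>\<Delta> (pr i)\<bar> \<le> (\<Sum>j<k. \<bar>\<Delta> j\<bar>)" using prk by (intro member_le_sum) auto
        have s2: "\<bar>\<Delta> i\<bar> \<le> (\<Sum>j<k. \<bar>\<Delta> j\<bar>)" using i by (intro member_le_sum) auto
        have s3: "\<bar>\<Delta> (nx i)\<bar> \<le> (\<Sum>j<k. \<bar>\<Delta> j\<bar>)" using nxk by (intro member_le_sum) auto
        have "\<eta>1/3 * (\<bar>\<Delta> (pr i)\<bar> + \<bar>\<Delta> i\<bar> + \<bar>\<Delta> (nx i)\<bar>) \<le> \<eta>1/3 * (3 * (\<Sum>j<k. \<bar>\<Delta> j\<bar>))"
          using s1 s2 s3 \<eta>1 by (intro mult_left_mono) auto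
        with h show "\<bar>a i * \<Delta> ((i+k-1) mod k) + bf i * \<Delta> i + c i * \<Delta> ((i+1) mod k)\<bar> \<le> \<eta>1 * (\<Sum>j<k. \<bar>\<Delta> j\<bar>)"
          by (simp add: pr_def nx_def)
      qed
      have "\<bar>\<alpha> * \<Delta> 0 + \<beta> * \<Delta> 1\<bar> \<le> C * \<eta>1 * (\<bar>\<Delta> 0\<bar> + \<bar>\<Delta> 1\<bar>)"
        using TR[OF _ _ hyp] \<eta>1 by (simp add: \<eta>1_def)
      also have "\<dots> \<le> \<eta> * (\<bar>\<Delta> 0\<bar> + \<bar>\<Delta> 1\<bar>)"
      proof (rule mult_right_mono)
        have "C * \<eta>1 \<le> \<bar>C\<bar> * \<eta>1" using \<eta>1 by (intro mult_right_mono) auto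
        also have "\<dots> \<le> \<bar>C\<bar> * (\<eta> / (\<bar>C\<bar> + 1))" by (intro mult_left_mono) (auto simp: \<eta>1_def)
        also have "\<dots> \<le> \<eta>" using e by (simp add: field_simps)
        finally show "C * \<eta>1 \<le> \<eta>" .
      qed simp
      finally show "\<bar>\<alpha> * (t' 0 - t 0) + \<beta> * (t' 1 - t 1)\<bar> \<le> \<eta> * (\<bar>t' 0 - t 0\<bar> + \<bar>t' 1 - t 1\<bar>)"
        by (simp add: \<Delta>_def)
    qed
  qed
  define s where "s = \<bar>\<alpha>\<bar> + \<bar>\<beta>\<bar>"
  have s: "s > 0" using ab by (auto simp: s_def)
  show ?thesis
  proof (rule exI[of _ "\<alpha>/s"], rule exI[of _ "\<beta>/s"], intro conjI allI impI)
    show "\<bar>\<alpha> / s\<bar> + \<bar>\<beta> / s\<bar> = 1" using s by (simp add: abs_divide add_divide_distrib[symmetric] s_def)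
    fix \<eta> :: real assume e: "\<eta> > 0"
    obtain \<rho> where \<rho>: "\<rho> > 0" "\<forall>t'\<in>E. (\<forall>j<k. \<bar>t' j - t j\<bar> < \<rho>) \<longrightarrow>
            \<bar>\<alpha> * (t' 0 - t 0) + \<beta> * (t' 1 - t 1)\<bar> \<le> (\<eta> * s) * (\<bar>t' 0 - t 0\<bar> + \<bar>t' 1 - t 1\<bar>)"
      using unnorm[of "\<eta> * s"] e s by auto
    show "\<exists>\<rho>>0. \<forall>t'\<in>E. (\<forall>j<k. \<bar>t' j - t j\<bar> < \<rho>) \<longrightarrow>
            \<bar>\<alpha> / s * (t' 0 - t 0) + \<beta> / s * (t' 1 - t 1)\<bar> \<le> \<eta> * (\<bar>t' 0 - t 0\<bar> + \<bar>t' 1 - t 1\<bar>)"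
    proof (intro exI[of _ \<rho>] conjI \<rho>(1) ballI impI)
      fix t' assume "t' \<in> E" "\<forall>j<k. \<bar>t' j - t j\<bar> < \<rho>"
      hence h: "\<bar>\<alpha> * (t' 0 - t 0) + \<beta> * (t' 1 - t 1)\<bar> \<le> (\<eta> * s) * (\<bar>t' 0 - t 0\<bar> + \<bar>t' 1 - t 1\<bar>)" using \<rho>(2) by blast
      have "\<alpha> / s * (t' 0 - t 0) + \<beta> / s * (t' 1 - t 1) = (\<alpha> * (t' 0 - t 0) + \<beta> * (t' 1 - t 1)) / s"
        by (simp add: add_divide_distrib)
      hence "\<bar>\<alpha> / s * (t' 0 - t 0) + \<beta> / s * (t' 1 - t 1)\<bar> = \<bar>\<alpha> * (t' 0 - t 0) + \<beta> * (t' 1 - t 1)\<bar> / s"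
        using s by (simp add: abs_divide)
      also have "\<dots> \<le> (\<eta> * s) * (\<bar>t' 0 - t 0\<bar> + \<bar>t' 1 - t 1\<bar>) / s" by (rule divide_right_mono[OF h]) (use s in simp)
      also have "\<dots> = \<eta> * (\<bar>t' 0 - t 0\<bar> + \<bar>t' 1 - t 1\<bar>)" using s by simp
      finally show "\<bar>\<alpha> / s * (t' 0 - t 0) + \<beta> / s * (t' 1 - t 1)\<bar> \<le> \<eta> * (\<bar>t' 0 - t 0\<bar> + \<bar>t' 1 - t 1\<bar>)" .
    qed
  qed
qed

theorem proposition5p9:
  fixes k :: nat and \<gamma> :: "nat \<Rightarrow> real \<Rightarrow> real^2" and skew :: "nat \<Rightarrow> bool"
  assumes "pseudo_billiard k \<gamma> skew"
    and "odd (card {j. j < k \<and> skew j})"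
  shows "\<not> measure_reflective k \<gamma> skew"
proof
  assume mr: "measure_reflective k \<gamma> skew"
  have germs: "\<forall>j<k. curve_germ (\<gamma> j)" and orb0: "periodic_orbit k \<gamma> skew (\<lambda>_. 0)"
    using assms(1) by (simp_all add: pseudo_billiard_def)
  consider "k = 0" | "k = 1" | "k = 2" | "k \<ge> 3" by linarith
  then show False
  proof cases
    case 1
    then show False using assms(2) by simp
  next
    case 2
    have "vertex_ok k \<gamma> skew (\<lambda>_. 0) 0" using orb0 2 by (simp add: periodic_orbit_def)
    then show False using 2 by (simp add: vertex_ok_def refl_law_def)
  next
    case 3
    have "\<not> skew j" if "j < 2" for j
    proof
      assume sk: "skew j"
      have "vertex_ok k \<gamma> skew (\<lambda>_. 0) j" using orb0 3 that by (simp add: periodic_orbit_def)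
      moreover have "(j + k - 1) mod k = (j + 1) mod k" using that 3 by (cases j) auto
      ultimately show False using sk by (auto simp: vertex_ok_def refl_law_def mult_less_0_iff)
    qed
    hence E0: "{j. j < k \<and> skew j} = {}" using 3 by auto
    show False using assms(2) unfolding E0 by simp
  next
    case 4
    have "\<forall>j<k. \<exists>\<epsilon>>0. C3_on {-\<epsilon><..<\<epsilon>} (\<gamma> j)" using germs by (simp add: curve_germ_def)
    hence "\<exists>\<epsilon>>0. \<forall>j<k. C3_on {-\<epsilon><..<\<epsilon>} (\<gamma> j)"
    proof (rule finite_min[where P="\<lambda>j \<epsilon>. C3_on {-\<epsilon><..<\<epsilon>} (\<gamma> j)"])
      fix i and r r' :: real assume a: "C3_on {-r<..<r} (\<gamma> i)" "0 < r'" "r' \<le> r"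
      show "C3_on {-r'<..<r'} (\<gamma> i)" by (rule C3_mono[OF a(1)]) (use a in auto)
    qed
    then obtain \<epsilon> where \<epsilon>: "\<epsilon> > 0" and C3: "\<forall>j<k. C3_on {-\<epsilon><..<\<epsilon>} (\<gamma> j)" by blast
    define E where "E = {t. (\<forall>j<k. t j \<in> {-\<epsilon><..<\<epsilon>}) \<and> periodic_orbit k \<gamma> skew t}"
    have "(\<lambda>t. (t 0, t 1)) ` E \<in> null_sets lebesgue"
    proof (rule cover_null)
      fix t assume tE: "t \<in> E"
      show "\<exists>\<alpha> \<beta>. \<bar>\<alpha>\<bar> + \<bar>\<beta>\<bar> = 1 \<and> (\<forall>\<eta>>0. \<exists>\<rho>>0. \<forall>t'\<in>E. (\<forall>j<k. \<bar>t' j - t j\<bar> < \<rho>) \<longrightarrow>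
            \<bar>\<alpha> * (t' 0 - t 0) + \<beta> * (t' 1 - t 1)\<bar> \<le> \<eta> * (\<bar>t' 0 - t 0\<bar> + \<bar>t' 1 - t 1\<bar>))"
      proof (rule cone_at_orbit[OF 4 assms(2)])
        fix j assume j: "j < k"
        have tj: "t j \<in> {-\<epsilon><..<\<epsilon>}" using tE j by (simp add: E_def)
        show "(\<gamma> j has_vector_derivative vector_derivative (\<gamma> j) (at (t j))) (at (t j))"
          using C3_facts(1)[OF _ _ tj] C3 j by simp
        show "\<exists>W. ((\<lambda>s. vector_derivative (\<gamma> j) (at s)) has_vector_derivative W) (at (t j))"
          using C3_facts(2)[OF _ _ tj] C3 j by simp
      next
        show "periodic_orbit k \<gamma> skew t" using tE by (simp add: E_def)
      next
        fix t' assume "t' \<in> E" thus "periodic_orbit k \<gamma> skew t'" by (simp add: E_def)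
      qed
    qed
    moreover have "(\<lambda>t. (t 0, t 1)) ` E \<notin> null_sets lebesgue"
      using mr[unfolded measure_reflective_def, rule_format, OF \<epsilon>] unfolding E_def .
    ultimately show False by simp
  qed
qed


end
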